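(* If $\mathrm{char}(\Bbbk)=3$, then $P$ is minimally generated by $h_1=yz-x^3-y^6z^2+xy^4z^3$, $h_2=z^3+xy^3+x^2yz-y^5z^4$ and $h_3=y^4+xy^2z+x^2z^2-y^4z^5$; in particular $\mu(P)=3$.
   Context: $\Bbbk$ is a field. $\rho:\Bbbk[[x,y,z]]\to\Bbbk[[t]]$ is the $\Bbbk$-algebra morphism with $\rho(x)=t^6+t^{31}$, $\rho(y)=t^8$, $\rho(z)=t^{10}$, and $P=\ker\rho$. $\mu(P)$ is the minimal number of generators of $P$. *)

theory Defs
  imports "HOL-Computational_Algebra.Formal_Power_Series"
begin

text \<open>Formal power series in three variables x,y,z over 'a, represented by their
coefficient functions: f (a,b,c) is the coefficient of x^a y^b z^c.\<close>

type_synonym 'a ps3 = "nat \<times> nat \<times> nat \<Rightarrow> 'a"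

definition ps3_add :: "'a::comm_ring_1 ps3 \<Rightarrow> 'a ps3 \<Rightarrow> 'a ps3" where
  "ps3_add f g = (\<lambda>e. f e + g e)"

definition ps3_mult :: "'a::comm_ring_1 ps3 \<Rightarrow> 'a ps3 \<Rightarrow> 'a ps3" where
  "ps3_mult f g = (\<lambda>(i,j,k). \<Sum>a\<le>i. \<Sum>b\<le>j. \<Sum>c\<le>k. f (a,b,c) * g (i-a, j-b, k-c))"

definition mon3 :: "nat \<Rightarrow> nat \<Rightarrow> nat \<Rightarrow> 'a::comm_ring_1 ps3" where
  "mon3 a b c = (\<lambda>e. if e = (a,b,c) then 1 else 0)"

definition ps3_ideal :: "'a::comm_ring_1 ps3 set \<Rightarrow> 'a ps3 set" where
  "ps3_ideal S = {f. \<exists>F c. finite F \<and> F \<subseteq> S \<and>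
                        f = (\<lambda>e. \<Sum>s\<in>F. ps3_mult (c s) s e)}"

definition mu3 :: "'a::comm_ring_1 ps3 set \<Rightarrow> nat" where
  "mu3 P = (LEAST n. \<exists>G. finite G \<and> card G = n \<and> ps3_ideal G = P)"

text \<open>The k-algebra morphism rho: k[[x,y,z]] \<rightarrow> k[[t]] with x \<mapsto> t^6+t^31,
  y \<mapsto> t^8, z \<mapsto> t^10 (continuous substitution; the coefficient of t^n only
  involves monomials x^a y^b z^c with a,b,c \<le> n).\<close>
definition rho :: "'a::comm_ring_1 ps3 \<Rightarrow> 'a fps" where
  "rho f = Abs_fps (\<lambda>n. \<Sum>a\<le>n. \<Sum>b\<le>n. \<Sum>c\<le>n.
      f (a,b,c) * fps_nth ((fps_X ^ 6 + fps_X ^ 31) ^ a * fps_X ^ (8*b + 10*c)) n)"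

definition Pker :: "'a::comm_ring_1 ps3 set" where
  "Pker = {f. rho f = 0}"

definition h1 :: "'a::comm_ring_1 ps3" where
  "h1 = (\<lambda>e. mon3 0 1 1 e - mon3 3 0 0 e - mon3 0 6 2 e + mon3 1 4 3 e)"

definition h2 :: "'a::comm_ring_1 ps3" where
  "h2 = (\<lambda>e. mon3 0 0 3 e + mon3 1 3 0 e + mon3 2 1 1 e - mon3 0 5 4 e)"

definition h3 :: "'a::comm_ring_1 ps3" where
  "h3 = (\<lambda>e. mon3 0 4 0 e + mon3 1 2 1 e + mon3 2 0 2 e - mon3 0 4 5 e)"

end

theory Submission
  imports Defs
begin

unbundle fps_syntax


lemma char3_facts:
  assumes "CHAR('a::field) = 3"
  shows "(3::'a) = 0" "(2::'a) \<noteq> 0" "(4::'a) = 1"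
proof -
  have "of_nat 3 = (0::'a)" using assms of_nat_eq_0_iff_char_dvd[of 3, where ?'a='a] by simp
  thus "(3::'a) = 0" by simp
  have "of_nat 2 \<noteq> (0::'a)" using assms of_nat_eq_0_iff_char_dvd[of 2, where ?'a='a] by simp
  thus "(2::'a) \<noteq> 0" by simp
  have "(4::'a) = 3 + 1" by simp
  thus "(4::'a) = 1" using \<open>(3::'a) = 0\<close> by simp
qed



definition XX :: "'a::comm_ring_1 fps" where "XX = fps_X^6 + fps_X^31"
definition MM :: "nat\<times>nat\<times>nat \<Rightarrow> 'a::comm_ring_1 fps" where
  "MM e = (case e of (a,b,c) \<Rightarrow> XX^a * fps_X^(8*b+10*c))"
definition wt :: "nat\<times>nat\<times>nat \<Rightarrow> nat" where "wt e = (case e of (a,b,c) \<Rightarrow> 6*a+8*b+10*c)"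
definition box :: "nat \<Rightarrow> (nat\<times>nat\<times>nat) set" where "box n = {..n} \<times> {..n} \<times> {..n}"

lemma finite_box[simp]: "finite (box n)" by (simp add: box_def)

lemma XX_eq: "(XX::'a::comm_ring_1 fps) = fps_X^6 * (1 + fps_X^25)"
  by (simp add: XX_def algebra_simps power_add[symmetric])

lemma MM_eq: "(MM (a,b,c)::'a::comm_ring_1 fps) = fps_X^(wt (a,b,c)) * (1 + fps_X^25)^a"
proof -
  have "(XX::'a fps)^a = fps_X^(6*a) * (1 + fps_X^25)^a"
    by (simp add: XX_eq power_mult_distrib power_mult)
  thus ?thesis by (simp add: MM_def wt_def power_add algebra_simps)
qed

lemma MM_nth_zero: "n < wt e \<Longrightarrow> (MM e :: 'a::comm_ring_1 fps) $ n = 0"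
  by (cases e) (simp add: MM_eq fps_X_power_mult_nth)

lemma wt_box: "wt e \<le> n \<Longrightarrow> e \<in> box n"
  by (cases e) (auto simp: wt_def box_def)

lemma MM_nth_zero_box: "e \<notin> box n \<Longrightarrow> (MM e :: 'a::comm_ring_1 fps) $ n = 0"
  using wt_box[of e n] by (intro MM_nth_zero) (meson leI)

lemma rho_nth_box: "rho f $ n = (\<Sum>e\<in>box n. f e * MM e $ n)"
  unfolding rho_def box_def fps_nth_Abs_fps sum.cartesian_product
  by (rule sum.cong) (auto simp: MM_def XX_def)

lemma rho_nth_gen:
  assumes "finite S" "\<And>e. wt e \<le> n \<Longrightarrow> f e \<noteq> 0 \<Longrightarrow> e \<in> S"
  shows "rho f $ n = (\<Sum>e\<in>S. f e * MM e $ n)"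
proof -
  have "rho f $ n = (\<Sum>e\<in>S \<union> box n. f e * MM e $ n)"
    unfolding rho_nth_box
  proof (rule sum.mono_neutral_left)
    show "\<forall>i\<in>S \<union> box n - box n. f i * MM i $ n = 0"
    proof
      fix i assume "i \<in> S \<union> box n - box n"
      hence "i \<notin> box n" by blast
      hence "(MM i :: 'a fps) $ n = 0" by (rule MM_nth_zero_box)
      thus "f i * MM i $ n = 0" by simp
    qed
  qed (use assms in auto)
  also have "\<dots> = (\<Sum>e\<in>S. f e * MM e $ n)"
  proof (rule sum.mono_neutral_right)
    show "\<forall>i\<in>S \<union> box n - S. f i * MM i $ n = 0"
    proof
      fix i assume i: "i \<in> S \<union> box n - S"
      show "f i * MM i $ n = 0"
      proof (cases "wt i \<le> n")
        case True hence "f i = 0" using assms(2)[of i] i by blast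
        thus ?thesis by simp
      next
        case False thus ?thesis by (simp add: MM_nth_zero)
      qed
    qed
  qed (use assms in auto)
  finally show ?thesis .
qed

lemma rho_add: "rho (\<lambda>e. f e + g e) = rho f + rho g"
  by (rule fps_ext) (simp add: rho_nth_box algebra_simps sum.distrib)

lemma rho_diff: "rho (\<lambda>e. f e - g e) = rho f - rho g"
  by (rule fps_ext) (simp add: rho_nth_box algebra_simps sum_subtractf)

lemma rho_sum: "rho (\<lambda>e. \<Sum>s\<in>F. g s e) = (\<Sum>s\<in>F. rho (g s))"
  by (rule fps_ext) (simp add: rho_nth_box fps_sum_nth sum_distrib_right sum.swap[of _ F])

lemma rho_zero: "rho (\<lambda>e. 0) = 0"
  by (rule fps_ext) (simp add: rho_nth_box)



lemma ps3_mult_box: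
  "ps3_mult f g (i,j,k) = (\<Sum>e\<in>{..i}\<times>{..j}\<times>{..k}. f e * g (case e of (a,b,c) \<Rightarrow> (i-a,j-b,k-c)))"
  unfolding ps3_mult_def sum.cartesian_product by (simp add: split_def)

lemma ps3_mult_mon:
  "ps3_mult f (mon3 \<alpha> \<beta> \<gamma>) (i,j,k) =
     (if \<alpha> \<le> i \<and> \<beta> \<le> j \<and> \<gamma> \<le> k then f (i-\<alpha>,j-\<beta>,k-\<gamma>) else 0)"
proof -
  have "ps3_mult f (mon3 \<alpha> \<beta> \<gamma>) (i,j,k) =
     (\<Sum>e\<in>{..i}\<times>{..j}\<times>{..k}. if e = (i-\<alpha>,j-\<beta>,k-\<gamma>) \<and> \<alpha> \<le> i \<and> \<beta> \<le> j \<and> \<gamma> \<le> k then f e else 0)"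
    unfolding ps3_mult_box by (rule sum.cong) (auto simp: mon3_def)
  also have "\<dots> = (if \<alpha> \<le> i \<and> \<beta> \<le> j \<and> \<gamma> \<le> k then f (i-\<alpha>,j-\<beta>,k-\<gamma>) else 0)"
    by (cases "\<alpha> \<le> i \<and> \<beta> \<le> j \<and> \<gamma> \<le> k") (auto simp: sum.delta' intro!: sum.neutral)
  finally show ?thesis .
qed

lemma ps3_mult_add2: "ps3_mult f (\<lambda>e. g e + h e) = (\<lambda>e. ps3_mult f g e + ps3_mult f h e)"
  by (rule ext) (simp add: ps3_mult_def split_def algebra_simps sum.distrib)

lemma ps3_mult_diff2: "ps3_mult f (\<lambda>e. g e - h e) = (\<lambda>e. ps3_mult f g e - ps3_mult f h e)"
  by (rule ext) (simp add: ps3_mult_def split_def algebra_simps sum_subtractf)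



lemma MM_add: "(MM (a+\<alpha>, b+\<beta>, c+\<gamma>) :: 'a::comm_ring_1 fps) = MM (a,b,c) * MM (\<alpha>,\<beta>,\<gamma>)"
  by (simp add: MM_def power_add algebra_simps)

lemma rho_shift:
  "rho (ps3_mult f (mon3 \<alpha> \<beta> \<gamma>)) = rho f * (MM (\<alpha>,\<beta>,\<gamma>) :: 'a::comm_ring_1 fps)"
proof (rule fps_ext)
  fix n
  define sh where "sh = ps3_mult f (mon3 \<alpha> \<beta> \<gamma>)"
  define tr where "tr = (\<lambda>(a,b,c). (a+\<alpha>, b+\<beta>, c+\<gamma>::nat))"
  have sh: "sh (i,j,k) = (if \<alpha> \<le> i \<and> \<beta> \<le> j \<and> \<gamma> \<le> k then f (i-\<alpha>,j-\<beta>,k-\<gamma>) else 0)" for i j k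
    unfolding sh_def by (rule ps3_mult_mon)
  have inj: "inj_on tr (box n)" unfolding tr_def by (auto simp: inj_on_def)
  have "rho sh $ n = (\<Sum>e\<in>tr ` box n. sh e * MM e $ n)"
  proof (rule rho_nth_gen)
    fix e assume "wt e \<le> n" "sh e \<noteq> 0"
    then obtain i j k where e: "e = (i,j,k)" "\<alpha> \<le> i" "\<beta> \<le> j" "\<gamma> \<le> k" "i \<le> n" "j \<le> n" "k \<le> n"
      using sh wt_box[of e n] by (cases e) (auto simp: box_def split: if_splits)
    hence "(i-\<alpha>,j-\<beta>,k-\<gamma>) \<in> box n" "e = tr (i-\<alpha>,j-\<beta>,k-\<gamma>)" by (auto simp: box_def tr_def)
    thus "e \<in> tr ` box n" by blast
  qed simp
  also have "\<dots> = (\<Sum>e\<in>box n. sh (tr e) * MM (tr e) $ n)"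
    by (rule sum.reindex[OF inj, unfolded comp_def])
  also have "\<dots> = (\<Sum>e\<in>box n. f e * (MM e * MM (\<alpha>,\<beta>,\<gamma>)) $ n)"
    by (rule sum.cong) (auto simp: tr_def sh MM_add)
  also have "\<dots> = (\<Sum>e\<in>box n. \<Sum>k=0..n. f e * MM e $ k * MM (\<alpha>,\<beta>,\<gamma>) $ (n-k))"
    by (simp add: fps_mult_nth sum_distrib_left mult.assoc)
  also have "\<dots> = (\<Sum>k=0..n. \<Sum>e\<in>box n. f e * MM e $ k * MM (\<alpha>,\<beta>,\<gamma>) $ (n-k))"
    by (rule sum.swap)
  also have "\<dots> = (\<Sum>k=0..n. rho f $ k * MM (\<alpha>,\<beta>,\<gamma>) $ (n-k))"
  proof (rule sum.cong)
    fix k assume "k \<in> {0..n}"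
    hence "rho f $ k = (\<Sum>e\<in>box n. f e * MM e $ k)"
      by (intro rho_nth_gen) (auto intro: wt_box)
    thus "(\<Sum>e\<in>box n. f e * MM e $ k * MM (\<alpha>,\<beta>,\<gamma>) $ (n-k)) = rho f $ k * MM (\<alpha>,\<beta>,\<gamma>) $ (n-k)"
      by (simp add: sum_distrib_right)
  qed simp
  also have "\<dots> = (rho f * MM (\<alpha>,\<beta>,\<gamma>)) $ n" by (simp add: fps_mult_nth)
  finally show "rho (ps3_mult f (mon3 \<alpha> \<beta> \<gamma>)) $ n = (rho f * MM (\<alpha>,\<beta>,\<gamma>)) $ n"
    unfolding sh_def .
qed



lemma rho_ps3_mult_h1:
  "rho (ps3_mult f h1) = rho f * ((MM (0,1,1) - MM (3,0,0) - MM (0,6,2) + MM (1,4,3)) :: 'a::comm_ring_1 fps)"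
  unfolding h1_def ps3_mult_add2 ps3_mult_diff2 rho_add rho_diff rho_shift
  by (simp add: algebra_simps)

lemma rho_ps3_mult_h2:
  "rho (ps3_mult f h2) = rho f * ((MM (0,0,3) + MM (1,3,0) + MM (2,1,1) - MM (0,5,4)) :: 'a::comm_ring_1 fps)"
  unfolding h2_def ps3_mult_add2 ps3_mult_diff2 rho_add rho_diff rho_shift
  by (simp add: algebra_simps)

lemma rho_ps3_mult_h3:
  "rho (ps3_mult f h3) = rho f * ((MM (0,4,0) + MM (1,2,1) + MM (2,0,2) - MM (0,4,5)) :: 'a::comm_ring_1 fps)"
  unfolding h3_def ps3_mult_add2 ps3_mult_diff2 rho_add rho_diff rho_shift
  by (simp add: algebra_simps)

lemma poly_id1: "(x::'b::comm_ring_1)^18 - (x^6+x^31)^3 - x^68 + (x^6+x^31)*x^62 = 3 * (- (x^43) - x^68)"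
  by (simp add: power2_eq_square power3_eq_cube algebra_simps flip: power_add)
lemma poly_id2: "(x::'b::comm_ring_1)^30 + (x^6+x^31)*x^24 + (x^6+x^31)^2*x^18 - x^80 = 3 * (x^30 + x^55)"
  by (simp add: power2_eq_square power3_eq_cube algebra_simps flip: power_add)
lemma poly_id3: "(x::'b::comm_ring_1)^32 + (x^6+x^31)*x^26 + (x^6+x^31)^2*x^20 - x^82 = 3 * (x^32 + x^57)"
  by (simp add: power2_eq_square power3_eq_cube algebra_simps flip: power_add)

lemma three_fps: "(3::'a::comm_ring_1) = 0 \<Longrightarrow> (3::'a fps) = 0"
  by (metis fps_const_0_eq_0 numeral_fps_const)

lemma MM_h_zero:
  assumes "(3::'a::comm_ring_1) = 0"
  shows "((MM (0,1,1) - MM (3,0,0) - MM (0,6,2) + MM (1,4,3)) :: 'a fps) = 0"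
        "((MM (0,0,3) + MM (1,3,0) + MM (2,1,1) - MM (0,5,4)) :: 'a fps) = 0"
        "((MM (0,4,0) + MM (1,2,1) + MM (2,0,2) - MM (0,4,5)) :: 'a fps) = 0"
  using poly_id1[of "fps_X::'a fps"] poly_id2[of "fps_X::'a fps"] poly_id3[of "fps_X::'a fps"]
    three_fps[OF assms]
  by (simp_all add: MM_def XX_def)



fun rl :: "nat\<times>nat\<times>nat \<Rightarrow> nat" where
  "rl (a,b,c) = (if 1\<le>b \<and> 1\<le>c then 1 else if 3\<le>c then 2 else if 4\<le>b then 3 else 0)"

function EE :: "'a::comm_ring_1 ps3 \<Rightarrow> nat\<times>nat\<times>nat \<Rightarrow> 'a" where
"EE f (a,b,c) = f (a,b,c)
  - ( (if 3 \<le> a then - EE f (a-3,b+1,c+1) else 0)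
    + (if 6 \<le> b \<and> 2 \<le> c then - EE f (a,b-5,c-1) else 0)
    + (if 1 \<le> a \<and> 4 \<le> b \<and> 3 \<le> c then EE f (a-1,b-3,c-2) else 0)
    + (if 1 \<le> a \<and> b = 3 then EE f (a-1,0,c+3) else 0)
    + (if 2 \<le> a \<and> b = 1 \<and> 1 \<le> c then EE f (a-2,0,c+2) else 0)
    + (if b = 5 \<and> 4 \<le> c then - EE f (a,0,c-1) else 0)
    + (if 1 \<le> a \<and> 2 \<le> b \<and> c = 1 then EE f (a-1,b+2,0) else 0)
    + (if 2 \<le> a \<and> c = 2 then EE f (a-2,b+4,0) else 0)
    + (if 4 \<le> b \<and> c = 5 then - EE f (a,b,0) else 0))"
  by pat_completeness auto
termination
  by (relation "measure (\<lambda>(f,(a,b,c)). 7*a+8*b+10*c)") auto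

declare EE.simps[simp del]

definition c1 :: "'a::comm_ring_1 ps3 \<Rightarrow> 'a ps3" where
  "c1 f = (\<lambda>(a,b,c). EE f (a,b+1,c+1))"
definition c2 :: "'a::comm_ring_1 ps3 \<Rightarrow> 'a ps3" where
  "c2 f = (\<lambda>(a,b,c). if b = 0 then EE f (a,0,c+3) else 0)"
definition c3 :: "'a::comm_ring_1 ps3 \<Rightarrow> 'a ps3" where
  "c3 f = (\<lambda>(a,b,c). if c = 0 then EE f (a,b+4,0) else 0)"
definition rr :: "'a::comm_ring_1 ps3 \<Rightarrow> 'a ps3" where
  "rr f = (\<lambda>m. if rl m = 0 then EE f m else 0)"

lemma L1: "ps3_mult (c1 f) h1 (a,b,c) = (if 1\<le>b \<and> 1\<le>c then EE f (a,b,c) else 0)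
   + ((if 3 \<le> a then - EE f (a-3,b+1,c+1) else 0)
    + (if 6 \<le> b \<and> 2 \<le> c then - EE f (a,b-5,c-1) else 0)
    + (if 1 \<le> a \<and> 4 \<le> b \<and> 3 \<le> c then EE f (a-1,b-3,c-2) else 0))"
proof -
  have s: "6 \<le> b \<Longrightarrow> Suc (b - 6) = b - 5" "4 \<le> b \<Longrightarrow> Suc (b - 4) = b - 3"
    "3 \<le> c \<Longrightarrow> Suc (c-3) = c - 2" "2 \<le> c \<Longrightarrow> Suc (c-2) = c - Suc 0"
    "2 \<le> c \<Longrightarrow> \<not> 3 \<le> c \<Longrightarrow> c - Suc 0 = Suc 0" by auto
  show ?thesis
  unfolding h1_def ps3_mult_add2 ps3_mult_diff2 ps3_mult_mon c1_def
  by (auto simp: s)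
qed

lemma L2: "ps3_mult (c2 f) h2 (a,b,c) = (if b = 0 \<and> 3\<le>c then EE f (a,b,c) else 0)
   + ((if 1 \<le> a \<and> b = 3 then EE f (a-1,0,c+3) else 0)
    + (if 2 \<le> a \<and> b = 1 \<and> 1 \<le> c then EE f (a-2,0,c+2) else 0)
    + (if b = 5 \<and> 4 \<le> c then - EE f (a,0,c-1) else 0))"
  unfolding h2_def ps3_mult_add2 ps3_mult_diff2 ps3_mult_mon c2_def
  by auto

lemma L3: "ps3_mult (c3 f) h3 (a,b,c) = (if c = 0 \<and> 4\<le>b then EE f (a,b,c) else 0)
   + ((if 1 \<le> a \<and> 2 \<le> b \<and> c = 1 then EE f (a-1,b+2,0) else 0)
    + (if 2 \<le> a \<and> c = 2 then EE f (a-2,b+4,0) else 0)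
    + (if 4 \<le> b \<and> c = 5 then - EE f (a,b,0) else 0))"
  unfolding h3_def ps3_mult_add2 ps3_mult_diff2 ps3_mult_mon c3_def
  by auto



lemma div_id: "f m = ps3_mult (c1 f) h1 m + ps3_mult (c2 f) h2 m + ps3_mult (c3 f) h3 m + rr f m"
proof (cases m)
  case (fields a b c)
  have X: "(if 1\<le>b \<and> 1\<le>c then EE f (a,b,c) else 0) + (if b = 0 \<and> 3\<le>c then EE f (a,b,c) else 0)
     + (if c = 0 \<and> 4\<le>b then EE f (a,b,c) else 0) + rr f (a,b,c) = EE f (a,b,c)"
    by (auto simp: rr_def)
  show ?thesis
    unfolding fields L1 L2 L3
    using X EE.simps[of f a b c] by (simp add: algebra_simps)
qed


lemma XX_nth0: "(XX::'a::comm_ring_1 fps) $ 0 = 0"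
  by (simp add: XX_def)

lemma XX_nz: "(XX::'a::field fps) \<noteq> 0" and subdegree_XX: "subdegree (XX::'a::field fps) = 6"
proof -
  have u: "(1 + fps_X^25 :: 'a fps) $ 0 = 1" by simp
  hence u': "(1 + fps_X^25 :: 'a fps) \<noteq> 0" by (metis fps_zero_nth zero_neq_one)
  have "subdegree (1 + fps_X^25 :: 'a fps) = 0" using u by simp
  thus "subdegree (XX::'a fps) = 6" using u' by (simp add: XX_eq fps_X_power_subdegree)
  show "(XX::'a fps) \<noteq> 0" using u' by (simp add: XX_eq)
qed

lemma compose_XX:
  fixes C :: "'a::field fps"
  assumes "C \<noteq> 0"
  shows "C oo XX \<noteq> 0" "subdegree (C oo XX) = 6 * subdegree C"
proof -
  define k where "k = subdegree C"
  define D where "D = fps_shift k C"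
  have CD: "C = fps_X^k * D" using fps_shift_times_fps_X_power[of k C]
    by (simp add: D_def k_def mult.commute)
  have D0: "D $ 0 \<noteq> 0" using assms by (simp add: D_def k_def)
  have "C oo XX = (fps_X^k oo XX) * (D oo XX)"
    unfolding CD by (rule fps_compose_mult_distrib[OF XX_nth0])
  also have "fps_X^k oo XX = (XX::'a fps)^k"
    by (simp add: fps_compose_power[OF XX_nth0, symmetric] XX_nth0)
  finally have e: "C oo XX = XX^k * (D oo XX)" .
  have D': "(D oo XX) $ 0 \<noteq> 0" using D0 by simp
  hence D'': "D oo XX \<noteq> 0" by (metis fps_zero_nth)
  have XXk: "(XX::'a fps)^k \<noteq> 0" using XX_nz[where 'a='a] by (simp add: power_not_zero)
  show "C oo XX \<noteq> 0" unfolding e using D'' XXk by simp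
  show "subdegree (C oo XX) = 6 * subdegree C"
  proof -
    have "subdegree (D oo XX) = 0" using D' by simp
    moreover have "subdegree ((XX::'a fps)^k) = 6 * k" by (simp add: subdegree_XX)
    ultimately show ?thesis unfolding e using D'' XXk by (simp add: k_def)
  qed
qed

lemma six_residues:
  fixes g :: "nat \<Rightarrow> 'a::field fps"
  assumes res: "\<And>i. i < 6 \<Longrightarrow> g i = 0 \<or> subdegree (g i) mod 6 = i"
    and sum0: "(\<Sum>i<6. g i) = 0"
  shows "\<forall>i<6. g i = 0"
proof (rule ccontr)
  assume "\<not> (\<forall>i<6. g i = 0)"
  define S where "S = {i. i < 6 \<and> g i \<noteq> 0}"
  have Sne: "S \<noteq> {}" and Sfin: "finite S" using \<open>\<not> _\<close> by (auto simp: S_def)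
  define d where "d = Min ((\<lambda>i. subdegree (g i)) ` S)"
  have "d \<in> (\<lambda>i. subdegree (g i)) ` S" unfolding d_def using Sne Sfin by (intro Min_in) auto
  then obtain i0 where i0: "i0 \<in> S" "subdegree (g i0) = d" by auto
  have others: "g i $ d = 0" if "i < 6" "i \<noteq> i0" for i
  proof (cases "g i = 0")
    case False
    hence "i \<in> S" using that by (auto simp: S_def)
    hence "d \<le> subdegree (g i)" using Sfin by (auto simp: d_def)
    moreover have "subdegree (g i) \<noteq> d"
    proof
      assume "subdegree (g i) = d"
      hence "i = i0" using res[of i] res[of i0] i0 that False by (auto simp: S_def)
      thus False using that by simp
    qed
    ultimately have "d < subdegree (g i)" by simp
    thus ?thesis by (rule nth_less_subdegree_zero)
  qed simp
  have "(\<Sum>i<6. g i) $ d = (\<Sum>i<6. g i $ d)" by (simp add: fps_sum_nth)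
  also have "\<dots> = g i0 $ d"
  proof -
    have "i0 < 6" using i0 by (auto simp: S_def)
    hence "(\<Sum>i<6. g i $ d) = g i0 $ d + (\<Sum>i\<in>{..<6} - {i0}. g i $ d)"
      by (simp add: sum.remove)
    also have "(\<Sum>i\<in>{..<6} - {i0}. g i $ d) = 0" by (rule sum.neutral) (auto intro: others)
    finally show ?thesis by simp
  qed
  finally have "(\<Sum>i<6. g i) $ d \<noteq> 0" using i0 by (auto simp: S_def)
  thus False using sum0 by simp
qed



definition xser :: "'a::comm_ring_1 fps \<Rightarrow> 'a ps3" where
  "xser A = (\<lambda>(a,b,c). if b = 0 \<and> c = 0 then A $ a else 0)"

lemma rho_xser: "rho (xser A) = A oo (XX::'a::comm_ring_1 fps)"
proof (rule fps_ext)
  fix n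
  have inj: "inj_on (\<lambda>a::nat. (a,0::nat,0::nat)) {0..n}" by (auto simp: inj_on_def)
  have "rho (xser A) $ n = (\<Sum>e\<in>(\<lambda>a. (a,0,0)) ` {0..n}. xser A e * MM e $ n)"
  proof (rule rho_nth_gen)
    fix e assume "wt e \<le> n" "xser A e \<noteq> 0"
    thus "e \<in> (\<lambda>a. (a,0,0)) ` {0..n}"
      by (cases e) (auto simp: xser_def wt_def split: if_splits)
  qed simp
  also have "\<dots> = (\<Sum>a=0..n. A $ a * (XX^a) $ n)"
    by (subst sum.reindex[OF inj]) (simp add: xser_def MM_def)
  also have "\<dots> = (A oo XX) $ n" by (simp add: fps_compose_nth)
  finally show "rho (xser A) $ n = (A oo XX) $ n" .
qed

definition AA :: "'a::comm_ring_1 ps3 \<Rightarrow> nat \<Rightarrow> nat \<Rightarrow> 'a fps" where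
  "AA r b c = Abs_fps (\<lambda>a. r (a,b,c))"

definition PP :: "'a::comm_ring_1 ps3 \<Rightarrow> nat \<Rightarrow> nat \<Rightarrow> 'a ps3" where
  "PP r b c = ps3_mult (xser (AA r b c)) (mon3 0 b c)"

lemma PP_eval: "PP r b c (i,j,k) = (if j = b \<and> k = c then r (i,b,c) else 0)"
  by (auto simp: PP_def ps3_mult_mon xser_def AA_def)

lemma normal_decomp:
  assumes "\<And>a b c. r (a,b,c) \<noteq> 0 \<Longrightarrow> rl (a,b,c) = 0"
  shows "r = (\<lambda>e. PP r 0 0 e + PP r 1 0 e + PP r 2 0 e + PP r 3 0 e + PP r 0 1 e + PP r 0 2 e)"
proof (rule ext)
  fix e show "r e = PP r 0 0 e + PP r 1 0 e + PP r 2 0 e + PP r 3 0 e + PP r 0 1 e + PP r 0 2 e"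
  proof (cases e)
    case (fields i j k)
    show ?thesis
    proof (cases "r (i,j,k) = 0")
      case True thus ?thesis unfolding fields PP_eval by auto
    next
      case False
      hence "rl (i,j,k) = 0" by (rule assms)
      hence "(j = 0 \<and> k \<le> 2) \<or> (k = 0 \<and> j \<le> 3)" by (auto split: if_splits)
      hence "(j,k) \<in> {(0,0),(1,0),(2,0),(3,0),(0,1),(0,2)}" by auto
      thus ?thesis unfolding fields PP_eval by auto
    qed
  qed
qed

lemma rho_PP: "rho (PP r b c) = (AA r b c oo XX) * (fps_X^(8*b+10*c) :: 'a::comm_ring_1 fps)"
  by (simp add: PP_def rho_shift rho_xser MM_def)



lemma compose_lin: "(U + fps_X^k * V) oo XX = (U oo XX) + (XX::'a::field fps)^k * (V oo XX)"
  by (simp add: fps_compose_add_distrib fps_compose_mult_distrib[OF XX_nth0]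
       fps_compose_power[OF XX_nth0, symmetric] XX_nth0)

lemma res_lemma:
  fixes C Q :: "'a::field fps"
  assumes "Q \<noteq> 0"
  shows "(C oo XX) * Q = 0 \<or> subdegree ((C oo XX) * Q) mod 6 = subdegree Q mod 6"
proof (cases "C = 0")
  case False
  thus ?thesis using compose_XX[OF False] assms by simp
qed simp

lemma zero_lemma:
  fixes C Q :: "'a::field fps"
  assumes "(C oo XX) * Q = 0" "Q \<noteq> 0"
  shows "C = 0"
  using assms compose_XX(1)[of C] by auto

lemma subdeg_poly:
  fixes q :: "'a::field fps"
  assumes "q $ d \<noteq> 0" "\<And>i. i < d \<Longrightarrow> q $ i = 0"
  shows "q \<noteq> 0" "subdegree q = d"
  using assms by (auto intro: subdegreeI)

lemma poly_id4: "(x::'b::comm_ring_1)^24 - (x^6+x^31)^4 = -(x^49 + x^99 + x^124) + 3 * (-(x^49) - 2*x^74 - x^99)"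
proof -
  have "(x^6+x^31)^4 = (x^6+x^31)^2*(x^6+x^31)^2" by (simp flip: power_add)
  thus ?thesis by (simp add: power2_eq_square power3_eq_cube algebra_simps flip: power_add)
qed

lemma poly_id5: "(x::'b::comm_ring_1)^20 - (x^6+x^31)^2 * x^8 = x^45 - x^70 + 3 * (-(x^45))"
  by (simp add: power2_eq_square power3_eq_cube algebra_simps flip: power_add)

lemma poly_id6: "(x::'b::comm_ring_1)^16 - (x^6+x^31) * x^10 = - (x^41)"
  by (simp add: power2_eq_square power3_eq_cube algebra_simps flip: power_add)

lemma Q_facts:
  assumes "(3::'a::field) = 0"
  shows "(fps_X^24 - XX^4 :: 'a fps) \<noteq> 0" "subdegree (fps_X^24 - XX^4 :: 'a fps) = 49"
    "(fps_X^20 - XX^2 * fps_X^8 :: 'a fps) \<noteq> 0" "subdegree (fps_X^20 - XX^2 * fps_X^8 :: 'a fps) = 45"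
    "(fps_X^16 - XX * fps_X^10 :: 'a fps) \<noteq> 0" "subdegree (fps_X^16 - XX * fps_X^10 :: 'a fps) = 41"
proof -
  have t: "(3::'a fps) = 0" by (rule three_fps[OF assms])
  have e1: "(fps_X^24 - XX^4 :: 'a fps) = -(fps_X^49 + fps_X^99 + fps_X^124)"
    using poly_id4[of "fps_X::'a fps"] t by (simp add: XX_def)
  have e2: "(fps_X^20 - XX^2 * fps_X^8 :: 'a fps) = fps_X^45 - fps_X^70"
    using poly_id5[of "fps_X::'a fps"] t by (simp add: XX_def)
  have e3: "(fps_X^16 - XX * fps_X^10 :: 'a fps) = - (fps_X^41)"
    using poly_id6[of "fps_X::'a fps"] by (simp add: XX_def)
  show "(fps_X^24 - XX^4 :: 'a fps) \<noteq> 0" "subdegree (fps_X^24 - XX^4 :: 'a fps) = 49"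
    unfolding e1 by (rule subdeg_poly[where d=49]; simp)+
  show "(fps_X^20 - XX^2 * fps_X^8 :: 'a fps) \<noteq> 0" "subdegree (fps_X^20 - XX^2 * fps_X^8 :: 'a fps) = 45"
    unfolding e2 by (rule subdeg_poly[where d=45]; simp)+
  show "(fps_X^16 - XX * fps_X^10 :: 'a fps) \<noteq> 0" "subdegree (fps_X^16 - XX * fps_X^10 :: 'a fps) = 41"
    unfolding e3 by (rule subdeg_poly[where d=41]; simp)+
qed



lemma ring_id: "(A0 + y^4*A3) * 1 + A3*(x^24 - y^4) + (A1 + y^2*B2)*x^8 + B2*(x^20 - y^2*x^8)
   + (B1 + y^1*A2)*x^10 + A2*(x^16 - y*x^10)
   = A0 + A1*x^8 + A2*x^16 + A3*x^24 + B1*x^10 + (B2::'b::comm_ring_1)*x^20"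
  by (simp add: algebra_simps)

lemma normal_inj:
  fixes r :: "'a::field ps3"
  assumes c3: "(3::'a) = 0" and nr: "\<And>a b c. r (a,b,c) \<noteq> 0 \<Longrightarrow> rl (a,b,c) = 0"
    and z: "rho r = 0"
  shows "r e = 0"
proof -
  define a where "a = (\<lambda>b c. AA r b c oo (XX::'a fps))"
  have rr: "rho r = a 0 0 + a 1 0 * fps_X^8 + a 2 0 * fps_X^16 + a 3 0 * fps_X^24
      + a 0 1 * fps_X^10 + a 0 2 * fps_X^20"
    using arg_cong[where f=rho, OF normal_decomp[OF nr]] by (simp add: rho_add rho_PP a_def)
  define C0 where "C0 = AA r 0 0 + fps_X^4 * AA r 3 0"
  define C2 where "C2 = AA r 1 0 + fps_X^2 * AA r 0 2"
  define C4 where "C4 = AA r 0 1 + fps_X^1 * AA r 2 0"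
  define Q1 where "Q1 = (fps_X^24 - XX^4 :: 'a fps)"
  define Q3 where "Q3 = (fps_X^20 - XX^2 * fps_X^8 :: 'a fps)"
  define Q5 where "Q5 = (fps_X^16 - XX * fps_X^10 :: 'a fps)"
  define g where "g = (\<lambda>i::nat. [(C0 oo XX) * 1, (AA r 3 0 oo XX) * Q1, (C2 oo XX) * fps_X^8,
      (AA r 0 2 oo XX) * Q3, (C4 oo XX) * fps_X^10, (AA r 2 0 oo XX) * Q5] ! i)"
  have s6: "(\<Sum>i<6. g i) = g 0 + g 1 + g 2 + g 3 + g 4 + g 5"
    by (simp add: eval_nat_numeral)
  have gs: "g 0 = (C0 oo XX) * 1" "g 1 = (AA r 3 0 oo XX) * Q1" "g 2 = (C2 oo XX) * fps_X^8"
    "g 3 = (AA r 0 2 oo XX) * Q3" "g 4 = (C4 oo XX) * fps_X^10" "g 5 = (AA r 2 0 oo XX) * Q5"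
    by (simp_all add: g_def)
  have "(\<Sum>i<6. g i) = rho r"
    unfolding rr s6 gs unfolding C0_def C2_def C4_def compose_lin Q1_def Q3_def Q5_def a_def
    by (rule ring_id)
  hence s0: "(\<Sum>i<6. g i) = 0" using z by simp
  note Q = Q_facts[OF c3, folded Q1_def Q3_def Q5_def]
  have X8: "(fps_X^8 :: 'a fps) \<noteq> 0" "subdegree (fps_X^8 :: 'a fps) = 8"
    and X10: "(fps_X^10 :: 'a fps) \<noteq> 0" "subdegree (fps_X^10 :: 'a fps) = 10"
    by (simp_all add: fps_X_power_subdegree)
  have res: "g i = 0 \<or> subdegree (g i) mod 6 = i" if "i < 6" for i
  proof -
    have ii: "i = 0 \<or> i = 1 \<or> i = 2 \<or> i = 3 \<or> i = 4 \<or> i = 5" using that by auto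
    have g0: "g 0 = 0 \<or> subdegree (g 0) mod 6 = 0"
      unfolding gs using res_lemma[of 1 C0] by simp
    have g1: "g 1 = 0 \<or> subdegree (g 1) mod 6 = 1"
      unfolding gs using res_lemma[OF Q(1), of "AA r 3 0"] Q(2) by simp
    have g2: "g 2 = 0 \<or> subdegree (g 2) mod 6 = 2"
      unfolding gs using res_lemma[OF X8(1), of C2] X8(2) by simp
    have g3: "g 3 = 0 \<or> subdegree (g 3) mod 6 = 3"
      unfolding gs using res_lemma[OF Q(3), of "AA r 0 2"] Q(4) by simp
    have g4: "g 4 = 0 \<or> subdegree (g 4) mod 6 = 4"
      unfolding gs using res_lemma[OF X10(1), of C4] X10(2) by simp
    have g5: "g 5 = 0 \<or> subdegree (g 5) mod 6 = 5"
      unfolding gs using res_lemma[OF Q(5), of "AA r 2 0"] Q(6) by simp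
    from ii show ?thesis by (elim disjE) (use g0 g1 g2 g3 g4 g5 in simp_all)
  qed
  have gz: "\<forall>i<6. g i = 0" by (rule six_residues[OF res s0])
  have z1: "AA r 3 0 = 0" using gz[rule_format, of 1] Q(1) zero_lemma unfolding gs by auto
  have z3: "AA r 0 2 = 0" using gz[rule_format, of 3] Q(3) zero_lemma unfolding gs by auto
  have z5: "AA r 2 0 = 0" using gz[rule_format, of 5] Q(5) zero_lemma unfolding gs by auto
  have "C0 = 0" using gz[rule_format, of 0] zero_lemma[of C0 1] unfolding gs by auto
  hence z0: "AA r 0 0 = 0" using z1 by (simp add: C0_def)
  have "C2 = 0" using gz[rule_format, of 2] X8(1) zero_lemma unfolding gs by auto
  hence z2: "AA r 1 0 = 0" using z3 by (simp add: C2_def)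
  have "C4 = 0" using gz[rule_format, of 4] X10(1) zero_lemma unfolding gs by auto
  hence z4: "AA r 0 1 = 0" using z5 by (simp add: C4_def)
  have "r e = PP r 0 0 e + PP r 1 0 e + PP r 2 0 e + PP r 3 0 e + PP r 0 1 e + PP r 0 2 e"
    using fun_cong[where x=e, OF normal_decomp[OF nr]] by simp
  also have "\<dots> = 0"
  proof (cases e)
    case (fields i j k)
    have "\<And>b c. AA r b c = 0 \<Longrightarrow> r (i,b,c) = 0"
      by (metis AA_def fps_nth_Abs_fps fps_zero_nth)
    hence "r (i,0,0) = 0" "r (i,1,0) = 0" "r (i,2,0) = 0" "r (i,3,0) = 0" "r (i,0,1) = 0" "r (i,0,2) = 0"
      using z0 z1 z2 z3 z4 z5 by auto
    thus ?thesis unfolding fields PP_eval by simp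
  qed
  finally show ?thesis .
qed



lemma mult_h1: "ps3_mult c h1 (i,j,k) = (if 1\<le>j \<and> 1\<le>k then c(i,j-1,k-1) else 0)
  - (if 3\<le>i then c(i-3,j,k) else 0) - (if 6\<le>j \<and> 2\<le>k then c(i,j-6,k-2) else 0)
  + (if 1\<le>i \<and> 4\<le>j \<and> 3\<le>k then c(i-1,j-4,k-3) else 0)"
  unfolding h1_def ps3_mult_add2 ps3_mult_diff2 ps3_mult_mon by simp

lemma mult_h2: "ps3_mult c h2 (i,j,k) = (if 3\<le>k then c(i,j,k-3) else 0)
  + (if 1\<le>i \<and> 3\<le>j then c(i-1,j-3,k) else 0) + (if 2\<le>i \<and> 1\<le>j \<and> 1\<le>k then c(i-2,j-1,k-1) else 0)
  - (if 5\<le>j \<and> 4\<le>k then c(i,j-5,k-4) else 0)"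
  unfolding h2_def ps3_mult_add2 ps3_mult_diff2 ps3_mult_mon by simp

lemma mult_h3: "ps3_mult c h3 (i,j,k) = (if 4\<le>j then c(i,j-4,k) else 0)
  + (if 1\<le>i \<and> 2\<le>j \<and> 1\<le>k then c(i-1,j-2,k-1) else 0) + (if 2\<le>i \<and> 2\<le>k then c(i-2,j,k-2) else 0)
  - (if 4\<le>j \<and> 5\<le>k then c(i,j-4,k-5) else 0)"
  unfolding h3_def ps3_mult_add2 ps3_mult_diff2 ps3_mult_mon by simp

lemma h_vals:
  "h1 (0,1,1) = (1::'a::comm_ring_1)" "h1 (0,0,3) = (0::'a)" "h1 (0,4,0) = (0::'a)"
  "h2 (0,1,1) = (0::'a)" "h2 (0,0,3) = (1::'a)" "h2 (0,4,0) = (0::'a)"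
  "h3 (0,1,1) = (0::'a)" "h3 (0,0,3) = (0::'a)" "h3 (0,4,0) = (1::'a)"
  by (simp_all add: h1_def h2_def h3_def mon3_def)

lemma h_distinct:
  shows "(h1::'a::field ps3) \<noteq> h2" "(h1::'a ps3) \<noteq> h3" "(h2::'a ps3) \<noteq> h3"
  using h_vals(1,4,7,5,8)[where 'a='a] by (metis zero_neq_one)+

lemma ps3_mult_one_left: "ps3_mult (mon3 0 0 0) g = g"
proof (rule ext)
  fix e show "ps3_mult (mon3 0 0 0) g e = g e"
  proof (cases e)
    case (fields i j k)
    have "ps3_mult (mon3 0 0 0) g (i,j,k) =
      (\<Sum>e\<in>{..i}\<times>{..j}\<times>{..k}. if e = (0,0,0) then g (i,j,k) else 0)"
      unfolding ps3_mult_box by (rule sum.cong) (auto simp: mon3_def)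
    also have "\<dots> = g (i,j,k)" by (simp add: sum.delta')
    finally show ?thesis using fields by simp
  qed
qed

lemma gen_in_ideal: "s \<in> S \<Longrightarrow> s \<in> ps3_ideal S"
  unfolding ps3_ideal_def
  by (rule CollectI, rule exI[of _ "{s}"], rule exI[of _ "\<lambda>_. mon3 0 0 0"])
     (simp add: ps3_mult_one_left)

lemma ideal_sub_Pker:
  assumes c3: "(3::'a::field) = 0" and f: "f \<in> ps3_ideal {h1,h2,h3::'a ps3}"
  shows "rho f = 0"
proof -
  obtain F c where F: "finite F" "F \<subseteq> {h1,h2,h3}" "f = (\<lambda>e. \<Sum>s\<in>F. ps3_mult (c s) s e)"
    using f unfolding ps3_ideal_def by blast
  have "rho f = (\<Sum>s\<in>F. rho (ps3_mult (c s) s))" unfolding F(3) by (rule rho_sum)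
  also have "\<dots> = 0"
  proof (rule sum.neutral, rule ballI)
    fix s assume "s \<in> F"
    hence "s = h1 \<or> s = h2 \<or> s = h3" using F(2) by auto
    thus "rho (ps3_mult (c s) s) = 0"
      using MM_h_zero[OF c3] by (auto simp: rho_ps3_mult_h1 rho_ps3_mult_h2 rho_ps3_mult_h3)
  qed
  finally show ?thesis .
qed

lemma rr_normal: "rr f (a,b,c) \<noteq> 0 \<Longrightarrow> rl (a,b,c) = 0"
  by (auto simp: rr_def split: if_splits)

lemma Pker_sub_ideal:
  assumes c3: "(3::'a::field) = 0" and f: "rho f = 0"
  shows "f \<in> ps3_ideal {h1,h2,h3::'a ps3}"
proof -
  have fe: "f = (\<lambda>e. ps3_mult (c1 f) h1 e + ps3_mult (c2 f) h2 e + ps3_mult (c3 f) h3 e + rr f e)"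
    by (rule ext) (rule div_id)
  have "rho f = rho (\<lambda>e. ps3_mult (c1 f) h1 e + ps3_mult (c2 f) h2 e + ps3_mult (c3 f) h3 e + rr f e)"
    by (rule arg_cong[OF fe])
  also have "\<dots> = rho (ps3_mult (c1 f) h1) + rho (ps3_mult (c2 f) h2) + rho (ps3_mult (c3 f) h3) + rho (rr f)"
    by (simp only: rho_add)
  also have "\<dots> = rho (rr f)"
    using MM_h_zero[OF c3] by (simp add: rho_ps3_mult_h1 rho_ps3_mult_h2 rho_ps3_mult_h3)
  finally have "rho (rr f) = 0" using f by simp
  hence rz: "rr f e = 0" for e by (intro normal_inj[OF c3]) (use rr_normal in blast)+
  define cc where "cc = (\<lambda>s::'a ps3. if s = h1 then c1 f else if s = h2 then c2 f else c3 f)"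
  have feq: "f = (\<lambda>e. \<Sum>s\<in>{h1,h2,h3}. ps3_mult (cc s) s e)"
  proof (rule ext)
    fix e
    have "f e = ps3_mult (c1 f) h1 e + ps3_mult (c2 f) h2 e + ps3_mult (c3 f) h3 e + rr f e"
      by (rule div_id)
    thus "f e = (\<Sum>s\<in>{h1,h2,h3}. ps3_mult (cc s) s e)"
    proof -
      note hd = h_distinct[where 'a='a]
      have cc: "cc h1 = c1 f" "cc h2 = c2 f" "cc h3 = c3 f"
        unfolding cc_def using hd by auto
      have "(\<Sum>s\<in>{h1,h2,h3}. ps3_mult (cc s) s e) =
          ps3_mult (cc h1) h1 e + (ps3_mult (cc h2) h2 e + ps3_mult (cc h3) h3 e)"
        using hd by (simp add: sum.insert_if)
      thus ?thesis unfolding cc using \<open>f e = _\<close> rz[of e] by (simp add: add.assoc)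
    qed
  qed
  show ?thesis unfolding ps3_ideal_def
    by (rule CollectI, rule exI[of _ "{h1,h2,h3}"], rule exI[of _ cc]) (simp add: feq[symmetric])
qed



lemma det_zero:
  fixes a1 a2 a3 b1 b2 b3 u1 u2 u3 v1 v2 v3 :: "'b::field"
  shows "(a1*u1+b1*v1)*((a2*u2+b2*v2)*(a3*u3+b3*v3) - (a2*u3+b2*v3)*(a3*u2+b3*v2))
       - (a1*u2+b1*v2)*((a2*u1+b2*v1)*(a3*u3+b3*v3) - (a2*u3+b2*v3)*(a3*u1+b3*v1))
       + (a1*u3+b1*v3)*((a2*u1+b2*v1)*(a3*u2+b3*v2) - (a2*u2+b2*v2)*(a3*u1+b3*v1)) = 0"
  by (simp add: algebra_simps)

lemma sum_two:
  assumes "F \<subseteq> {p,q}"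
  shows "(\<Sum>s\<in>F. w s) = (if p \<in> F then w p else 0) + (if q \<in> F \<and> q \<noteq> p then w q else 0)"
proof -
  have "F = {} \<or> F = {p} \<or> F = {q} \<or> F = {p,q}" using assms by blast
  thus ?thesis by (cases "p = q") auto
qed

lemma h_mult_vanish:
  assumes "s \<in> {h1,h2,h3}"
  shows "ps3_mult c s (0,0,0) = 0" "ps3_mult c s (0,1,0) = 0" "ps3_mult c s (0,0,1) = 0"
        "ps3_mult c s (0,0,2) = 0" "ps3_mult c s (0,2,0) = 0" "ps3_mult c s (0,3,0) = 0"
  using assms by (auto simp: mult_h1 mult_h2 mult_h3)

lemma ideal_vanish:
  assumes "g \<in> ps3_ideal {h1,h2,h3::'a::comm_ring_1 ps3}"
  shows "g (0,0,0) = 0" "g (0,1,0) = 0" "g (0,0,1) = 0" "g (0,0,2) = 0" "g (0,2,0) = 0" "g (0,3,0) = 0"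
proof -
  obtain F c where F: "F \<subseteq> {h1,h2,h3}" "g = (\<lambda>e. \<Sum>s\<in>F. ps3_mult (c s) s e)"
    using assms unfolding ps3_ideal_def by blast
  have hs: "\<And>s. s \<in> F \<Longrightarrow> s \<in> {h1,h2,h3}" using F(1) by (rule subsetD)
  have gen: "g pt = 0" if "\<And>s c. s \<in> {h1,h2,h3::'a ps3} \<Longrightarrow> ps3_mult c s pt = 0" for pt
    unfolding F(2)
  proof (rule sum.neutral, rule ballI)
    fix s assume "s \<in> F"
    hence "s \<in> {h1,h2,h3}" by (rule hs)
    thus "ps3_mult (c s) s pt = 0" by (rule that)
  qed
  show "g (0,0,0) = 0" by (rule gen, rule h_mult_vanish(1))
  show "g (0,1,0) = 0" by (rule gen, rule h_mult_vanish(2))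
  show "g (0,0,1) = 0" by (rule gen, rule h_mult_vanish(3))
  show "g (0,0,2) = 0" by (rule gen, rule h_mult_vanish(4))
  show "g (0,2,0) = 0" by (rule gen, rule h_mult_vanish(5))
  show "g (0,3,0) = 0" by (rule gen, rule h_mult_vanish(6))
qed

lemma mult_phi:
  assumes "g \<in> ps3_ideal {h1,h2,h3::'a::comm_ring_1 ps3}"
  shows "ps3_mult c g (0,1,1) = c (0,0,0) * g (0,1,1)"
        "ps3_mult c g (0,0,3) = c (0,0,0) * g (0,0,3)"
        "ps3_mult c g (0,4,0) = c (0,0,0) * g (0,4,0)"
  using ideal_vanish[OF assms]
  by (simp_all add: ps3_mult_def eval_nat_numeral atMost_Suc)



lemma card_le2:
  assumes "finite G" "card G \<le> 2"
  obtains p q where "G \<subseteq> {p,q}"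
proof -
  have "card G = 0 \<or> card G = 1 \<or> card G = 2" using assms(2) by presburger
  moreover
  { assume "card G = 0" hence "G = {}" using assms(1) by simp hence ?thesis using that by blast }
  moreover
  { assume "card G = 1" then obtain p where "G = {p}" by (auto simp: card_Suc_eq)
    hence ?thesis using that by blast }
  moreover
  { assume "card G = 2" then obtain p q where "G = {p,q}" by (auto simp: card_Suc_eq eval_nat_numeral)
    hence ?thesis using that by blast }
  ultimately show ?thesis by blast
qed

lemma rep_lemma:
  fixes G :: "'a::comm_ring_1 ps3 set"
  assumes GI: "\<And>s. s \<in> G \<Longrightarrow> s \<in> ps3_ideal {h1,h2,h3}" and pq: "G \<subseteq> {p,q}"
    and h: "h \<in> ps3_ideal G"
  shows "\<exists>\<alpha> \<beta>. h (0,1,1) = \<alpha> * p (0,1,1) + \<beta> * q (0,1,1) \<and>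
                h (0,0,3) = \<alpha> * p (0,0,3) + \<beta> * q (0,0,3) \<and>
                h (0,4,0) = \<alpha> * p (0,4,0) + \<beta> * q (0,4,0)"
proof -
  obtain F d where F: "F \<subseteq> G" "h = (\<lambda>e. \<Sum>s\<in>F. ps3_mult (d s) s e)"
    using h unfolding ps3_ideal_def by blast
  have Fpq: "F \<subseteq> {p,q}" using F pq by blast
  define \<alpha> where "\<alpha> = (if p \<in> F then d p (0,0,0) else 0)"
  define \<beta> where "\<beta> = (if q \<in> F \<and> q \<noteq> p then d q (0,0,0) else 0)"
  have key: "h pt = \<alpha> * p pt + \<beta> * q pt"
    if pt: "\<And>s c. s \<in> F \<Longrightarrow> ps3_mult c s pt = c (0,0,0) * s pt" for pt
  proof -
    have "h pt = (\<Sum>s\<in>F. d s (0,0,0) * s pt)" unfolding F(2) using pt by simp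
    also have "\<dots> = \<alpha> * p pt + \<beta> * q pt"
      unfolding sum_two[OF Fpq] \<alpha>_def \<beta>_def by simp
    finally show ?thesis .
  qed
  have inI: "s \<in> F \<Longrightarrow> s \<in> ps3_ideal {h1,h2,h3}" for s using GI F(1) by blast
  have k1: "h (0,1,1) = \<alpha> * p (0,1,1) + \<beta> * q (0,1,1)" by (rule key) (rule mult_phi(1)[OF inI])
  have k2: "h (0,0,3) = \<alpha> * p (0,0,3) + \<beta> * q (0,0,3)" by (rule key) (rule mult_phi(2)[OF inI])
  have k3: "h (0,4,0) = \<alpha> * p (0,4,0) + \<beta> * q (0,4,0)" by (rule key) (rule mult_phi(3)[OF inI])
  show ?thesis using k1 k2 k3 by blast
qed

theorem mainTheorem7:
  assumes "CHAR('a::field) = 3"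
  shows "ps3_ideal {h1, h2, h3} = (Pker :: 'a ps3 set) \<and> mu3 (Pker :: 'a ps3 set) = 3"
proof -
  have c3: "(3::'a) = 0" using char3_facts[OF assms] by simp
  have eq: "ps3_ideal {h1,h2,h3} = (Pker::'a ps3 set)"
  proof (rule set_eqI)
    fix f :: "'a ps3"
    show "f \<in> ps3_ideal {h1,h2,h3} \<longleftrightarrow> f \<in> Pker"
      unfolding Pker_def mem_Collect_eq using ideal_sub_Pker[OF c3, of f] Pker_sub_ideal[OF c3, of f]
      by blast
  qed
  have hin1: "h1 \<in> ps3_ideal {h1,h2,h3::'a ps3}" by (rule gen_in_ideal) simp
  have hin2: "h2 \<in> ps3_ideal {h1,h2,h3::'a ps3}" by (rule gen_in_ideal) simp
  have hin3: "h3 \<in> ps3_ideal {h1,h2,h3::'a ps3}" by (rule gen_in_ideal) simp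
  have hin: "h1 \<in> (Pker::'a ps3 set)" "h2 \<in> (Pker::'a ps3 set)" "h3 \<in> (Pker::'a ps3 set)"
    using hin1 hin2 hin3 unfolding eq by simp_all
  have lower: "3 \<le> card G" if G: "finite G" "ps3_ideal G = (Pker::'a ps3 set)" for G
  proof (rule ccontr)
    assume "\<not> 3 \<le> card G"
    hence "card G \<le> 2" by simp
    then obtain p q where pq: "G \<subseteq> {p,q}" using card_le2 G(1) by blast
    have GI: "s \<in> ps3_ideal {h1,h2,h3}" if "s \<in> G" for s
      using gen_in_ideal[OF that] G(2) eq by simp
    have hG: "h1 \<in> ps3_ideal G" "h2 \<in> ps3_ideal G" "h3 \<in> ps3_ideal G" using hin G(2) by auto
    obtain a1 b1 where r1: "h1 (0,1,1) = a1 * p (0,1,1) + b1 * q (0,1,1)"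
        "h1 (0,0,3) = a1 * p (0,0,3) + b1 * q (0,0,3)" "h1 (0,4,0) = a1 * p (0,4,0) + b1 * q (0,4,0)"
      using rep_lemma[OF GI pq hG(1)] by blast
    obtain a2 b2 where r2: "h2 (0,1,1) = a2 * p (0,1,1) + b2 * q (0,1,1)"
        "h2 (0,0,3) = a2 * p (0,0,3) + b2 * q (0,0,3)" "h2 (0,4,0) = a2 * p (0,4,0) + b2 * q (0,4,0)"
      using rep_lemma[OF GI pq hG(2)] by blast
    obtain a3 b3 where r3: "h3 (0,1,1) = a3 * p (0,1,1) + b3 * q (0,1,1)"
        "h3 (0,0,3) = a3 * p (0,0,3) + b3 * q (0,0,3)" "h3 (0,4,0) = a3 * p (0,4,0) + b3 * q (0,4,0)"
      using rep_lemma[OF GI pq hG(3)] by blast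
    have "(0::'a) = 1"
      using det_zero[of a1 "p (0,1,1)" b1 "q (0,1,1)" a2 "p (0,4,0)" b2 "q (0,4,0)" a3 "p (0,0,3)" b3 "q (0,0,3)"]
      using r1 r2 r3 h_vals[where 'a='a] by simp
    thus False by simp
  qed
  have card3: "card {h1,h2,h3::'a ps3} = 3" using h_distinct[where 'a='a] by simp
  have "mu3 (Pker :: 'a ps3 set) = 3"
    unfolding mu3_def
  proof (rule Least_equality)
    show "\<exists>G. finite G \<and> card G = 3 \<and> ps3_ideal G = (Pker::'a ps3 set)"
      by (rule exI[of _ "{h1,h2,h3}"]) (simp add: card3 eq)
  next
    fix n assume "\<exists>G. finite G \<and> card G = n \<and> ps3_ideal G = (Pker::'a ps3 set)"
    then obtain G where G: "finite G" "card G = n" "ps3_ideal G = (Pker::'a ps3 set)" by blast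
    have "3 \<le> card G" by (rule lower[OF G(1) G(3)])
    thus "3 \<le> n" using G(2) by simp
  qed
  thus ?thesis using eq by blast
qed



end
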